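(* Consider the algorithm, problem, and auxiliary sequence $\{u_k\}$ described in the context, and let the problem assumption and the random-sample assumption hold. Then for any $k\geq 0$, $$\mathbb{E}\left[\left({w}_{f,k}+e_{f,k}+\rho_k{w}_{F,k}+\rho_k{e}_{F,k}\right)^T(u_k-y_{k+1})\right]=0.$$
   Context: Setting: $N\ge1$, positive integers $n_1,\dots,n_N$ with $n=\sum_i n_i$, sets $X_i\subseteq\mathbb R^{n_i}$, $X=\prod_{i=1}^N X_i$; $\mathcal P_X,\mathcal P_{X_i}$ Euclidean projections. $\xi$ is a random vector with values in $\mathbb R^d$. $f:\mathbb R^n\times\mathbb R^d\to\mathbb R$, $F=(F_1,\dots,F_N):\mathbb R^n\times\mathbb R^d\to\mathbb R^n$; $f(x):=\mathbb E[f(x,\xi)]$, $F(x):=\mathbb E[F(x,\xi)]$. $\tilde\nabla f(x)$ is a subgradient of $f$ at $x$ and $\tilde\nabla f(x,\xi)$ a stochastic subgradient; subscript $i$ denotes the $i$-th block. $\mathbf U_\ell\in\mathbb R^{n\times n_\ell}$ with $[\mathbf U_1,\dots,\mathbf U_N]=\mathbf I_n$. Problem assumption: $F$ single-valued, continuous, monotone; $f$ real-valued convex; $X\subseteq\mathrm{int}(\mathrm{dom}(F)\cap\mathrm{dom}(f))$ nonempty, compact, convex (each $X_i$ closed convex). Algorithm: given $x_0,y_0\in X$, positive sequences $\{\gamma_k\},\{\rho_k\}$; for $k=0,1,\dots$: draw $i_k,\tilde i_k$ uniformly from $\{1,\dots,N\}$ and realizations $\xi_k,\tilde\xi_k$ of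 $\xi$; $y_{k+1}^{(i)}=\mathcal P_{X_i}\big(x_k^{(i)}-\gamma_k(\tilde\nabla_i f(x_k,\tilde\xi_k)+\rho_kF_i(x_k,\tilde\xi_k))\big)$ if $i=\tilde i_k$, else $x_k^{(i)}$; $x_{k+1}^{(i)}=\mathcal P_{X_i}\big(x_k^{(i)}-\gamma_k(\tilde\nabla_i f(y_{k+1},\xi_k)+\rho_kF_i(y_{k+1},\xi_k))\big)$ if $i=i_k$, else $x_k^{(i)}$. Errors: $w_{F,k}=F(y_{k+1},\xi_k)-F(y_{k+1})$, $w_{f,k}=\tilde\nabla f(y_{k+1},\xi_k)-\tilde\nabla f(y_{k+1})$, $e_{F,k}=N\mathbf U_{i_k}F_{i_k}(y_{k+1},\xi_k)-F(y_{k+1},\xi_k)$, $e_{f,k}=N\mathbf U_{i_k}\tilde\nabla_{i_k}f(y_{k+1},\xi_k)-\tilde\nabla f(y_{k+1},\xi_k)$. Auxiliary sequence: $u_0=x_0$, $u_{k+1}=\mathcal P_X\big(u_k+N^{-1}\gamma_k(w_{f,k}+e_{f,k}+\rho_kw_{F,k}+\rho_ke_{F,k})\big)$. Random-sample assumption: (a) the $\tilde\xi_k,\xi_k$ are i.i.d. copies of $\xi$, the $\tilde i_k,i_k$ i.i.d. uniform on $\{1,\dots,N\}$, all mutually independent; (b) $F(\cdot,\tilde\xi_k)$, $F(\cdot,\xi_k)$ unbiased for $F(\cdot)$ and $\tilde\nabla f(\cdot,\tilde\xi_k)$, $\tilde\nabla f(\cdot,\xi_k)$ unbiased for $\tilde\nabla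 f(\cdot)$; (c) there exist $\nu_F,\nu_f>0$ with $\mathbb E[\|F(x,\xi)-F(x)\|^2\mid x]\le\nu_F^2$, $\mathbb E[\|\tilde\nabla f(x,\xi)-\tilde\nabla f(x)\|^2\mid x]\le\nu_f^2$. *)

theory Defs
  imports "HOL-Probability.Probability"
begin

text \<open>Block structure of R^n: the coordinates (index type 'n) are partitioned into
  N blocks via blk; blocks are numbered 0..N-1 (paper: 1..N).\<close>

definition blockpart :: "('n \<Rightarrow> nat) \<Rightarrow> nat \<Rightarrow> real^'n \<Rightarrow> real^'n" where
  "blockpart blk i x = (\<chi> j. if blk j = i then x $ j else 0)"

definition block_subspace :: "('n \<Rightarrow> nat) \<Rightarrow> nat \<Rightarrow> (real^'n) set" where
  "block_subspace blk i = {v. \<forall>j. blk j \<noteq> i \<longrightarrow> v $ j = 0}"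

definition prod_set :: "('n \<Rightarrow> nat) \<Rightarrow> nat \<Rightarrow> (nat \<Rightarrow> (real^'n) set) \<Rightarrow> (real^'n) set" where
  "prod_set blk N Xb = {x. \<forall>i<N. blockpart blk i x \<in> Xb i}"
  \<comment> \<open>X = X_1 x ... x X_N, with X_i represented inside the i-th block subspace\<close>

definition block_update ::
  "('n \<Rightarrow> nat) \<Rightarrow> (nat \<Rightarrow> (real^'n) set) \<Rightarrow> nat \<Rightarrow> real \<Rightarrow> real^'n \<Rightarrow> real^'n \<Rightarrow> real^'n" where
  "block_update blk Xb i \<gamma> x v =
     (\<chi> j. if blk j = i then closest_point (Xb i) (blockpart blk i (x - \<gamma> *\<^sub>R v)) $ j else x $ j)"

definition is_subgradient :: "(real^'n \<Rightarrow> real) \<Rightarrow> real^'n \<Rightarrow> real^'n \<Rightarrow> bool" where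
  "is_subgradient f x s \<longleftrightarrow> (\<forall>y. f y \<ge> f x + s \<bullet> (y - x))"

text \<open>Iterates (x_k, y_k) of the algorithm, as functions of the sample point omega.
  Phi k z xi = stochastic subgradient + rho_k * F(z,xi).\<close>

primrec alg_iter ::
  "('n \<Rightarrow> nat) \<Rightarrow> (nat \<Rightarrow> (real^'n) set) \<Rightarrow> (nat \<Rightarrow> real) \<Rightarrow>
   (nat \<Rightarrow> real^'n \<Rightarrow> 'd \<Rightarrow> real^'n) \<Rightarrow> real^'n \<Rightarrow> real^'n \<Rightarrow>
   (nat \<Rightarrow> 'a \<Rightarrow> nat) \<Rightarrow> (nat \<Rightarrow> 'a \<Rightarrow> 'd) \<Rightarrow> (nat \<Rightarrow> 'a \<Rightarrow> nat) \<Rightarrow> (nat \<Rightarrow> 'a \<Rightarrow> 'd) \<Rightarrow>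
   nat \<Rightarrow> 'a \<Rightarrow> (real^'n) \<times> (real^'n)" where
  "alg_iter blk Xb \<gamma> Phi x0 y0 it xit ii xi 0 \<omega> = (x0, y0)"
| "alg_iter blk Xb \<gamma> Phi x0 y0 it xit ii xi (Suc k) \<omega> =
     (let x = fst (alg_iter blk Xb \<gamma> Phi x0 y0 it xit ii xi k \<omega>);
          y' = block_update blk Xb (it k \<omega>) (\<gamma> k) x (Phi k x (xit k \<omega>));
          x' = block_update blk Xb (ii k \<omega>) (\<gamma> k) x (Phi k y' (xi k \<omega>))
      in (x', y'))"

primrec aux_seq :: "(real^'n) set \<Rightarrow> nat \<Rightarrow> (nat \<Rightarrow> real) \<Rightarrow> real^'n \<Rightarrow>
   (nat \<Rightarrow> 'a \<Rightarrow> real^'n) \<Rightarrow> nat \<Rightarrow> 'a \<Rightarrow> real^'n" where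
  "aux_seq X N \<gamma> x0 err 0 \<omega> = x0"
| "aux_seq X N \<gamma> x0 err (Suc k) \<omega> =
     closest_point X (aux_seq X N \<gamma> x0 err k \<omega> + (\<gamma> k / real N) *\<^sub>R err k \<omega>)"

definition rv_events :: "'a measure \<Rightarrow> 'b measure \<Rightarrow> ('a \<Rightarrow> 'b) \<Rightarrow> 'a set set" where
  "rv_events M N X = {X -` A \<inter> space M | A. A \<in> sets N}"

datatype sample_tag = Tilde_Index | Tilde_Sample | Index | Sample

end

theory Submission
  imports Defs
begin


lemma blockpart_linear: "linear (blockpart blk i)"
  by (rule linearI) (auto simp: blockpart_def vec_eq_iff)

lemma blockpart_bl: "bounded_linear (blockpart blk i)"
  using blockpart_linear linear_conv_bounded_linear by blast

lemma norm_blockpart_le: "norm (blockpart blk i v) \<le> norm v"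
  by (rule norm_le_componentwise_cart) (simp add: blockpart_def)

lemma sum_blockpart:
  assumes "\<forall>j. blk j < N" shows "(\<Sum>i<N. blockpart blk i v) = v"
  using assms by (simp add: vec_eq_iff sum_component blockpart_def)

lemma continuous_blockpart: "continuous_on S (blockpart blk i)"
  by (rule linear_continuous_on[OF blockpart_bl])

lemma continuous_block_update:
  assumes "convex (Xb i)" "closed (Xb i)" "Xb i \<noteq> {}"
  shows "continuous_on UNIV (\<lambda>p. block_update blk Xb i c (fst p) (snd p))"
  unfolding block_update_def
proof (intro continuous_on_vec_lambda)
  fix j
  have cp: "continuous_on UNIV (\<lambda>p::(real^'a)\<times>(real^'a). closest_point (Xb i) (blockpart blk i (fst p - c *\<^sub>R snd p)))"
    by (intro continuous_on_compose2[OF continuous_on_closest_point[OF assms]]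
        continuous_on_compose2[OF continuous_blockpart] continuous_intros) auto
  show "continuous_on UNIV (\<lambda>p::(real^'a)\<times>(real^'a). if blk j = i then closest_point (Xb i) (blockpart blk i (fst p - c *\<^sub>R snd p)) $ j else fst p $ j)"
    using continuous_on_component[OF cp, where i=j] continuous_on_component[OF continuous_on_fst[OF continuous_on_id], where i=j]
    by (cases "blk j = i") simp_all
qed

lemma block_update_in:
  assumes x: "x \<in> prod_set blk N Xb" and i: "i < N"
    and sub: "Xb i \<subseteq> block_subspace blk i" and cl: "closed (Xb i)" and ne: "Xb i \<noteq> {}"
  shows "block_update blk Xb i c x v \<in> prod_set blk N Xb"
proof -
  define p where "p = closest_point (Xb i) (blockpart blk i (x - c *\<^sub>R v))"
  have pin: "p \<in> Xb i" unfolding p_def using closest_point_in_set[OF cl ne] .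
  then have p0: "\<And>j. blk j \<noteq> i \<Longrightarrow> p $ j = 0" using sub by (auto simp: block_subspace_def)
  have bu: "block_update blk Xb i c x v = (\<chi> j. if blk j = i then p $ j else x $ j)"
    unfolding block_update_def p_def by simp
  show ?thesis unfolding prod_set_def
  proof (intro CollectI allI impI)
    fix i' assume i': "i' < N"
    show "blockpart blk i' (block_update blk Xb i c x v) \<in> Xb i'"
    proof (cases "i' = i")
      case True
      have "blockpart blk i' (block_update blk Xb i c x v) = p"
        using True p0 by (auto simp: bu blockpart_def vec_eq_iff)
      then show ?thesis using pin True by simp
    next
      case False
      have "blockpart blk i' (block_update blk Xb i c x v) = blockpart blk i' x"
        using False by (auto simp: bu blockpart_def vec_eq_iff)
      then show ?thesis using x i' by (simp add: prod_set_def)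
    qed
  qed
qed



lemma meas_unif_count:
  "idx \<in> measurable L (uniform_count_measure A) \<Longrightarrow> idx \<in> measurable L (count_space A)"
  using measurable_cong_sets[OF refl sets_uniform_count_measure_count_space, of L A] by simp

lemma meas_blockpart[measurable]:
  "v \<in> borel_measurable L \<Longrightarrow> (\<lambda>\<omega>. blockpart blk i (v \<omega>)) \<in> borel_measurable L"
  by (rule measurable_compose[OF _ borel_measurable_continuous_onI[OF continuous_blockpart]])

lemma meas_block_update:
  assumes x: "x \<in> borel_measurable L" and v: "v \<in> borel_measurable L"
    and idx: "idx \<in> measurable L (uniform_count_measure {..<N})"
    and Xb: "\<forall>i<N. convex (Xb i) \<and> closed (Xb i) \<and> Xb i \<noteq> {}"
  shows "(\<lambda>\<omega>. block_update blk Xb (idx \<omega>) c (x \<omega>) (v \<omega>)) \<in> borel_measurable L"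
proof (rule measurable_compose_countable'[where I="{..<N}" and g=idx])
  show "idx \<in> measurable L (count_space {..<N})" using meas_unif_count[OF idx] .
  fix i assume "i \<in> {..<N}"
  then show "(\<lambda>\<omega>. block_update blk Xb i c (x \<omega>) (v \<omega>)) \<in> borel_measurable L"
    using Xb by (intro borel_measurable_continuous_Pair[OF x v continuous_block_update]) auto
qed auto

lemma meas_blockpart_idx:
  assumes v: "v \<in> borel_measurable L"
    and idx: "idx \<in> measurable L (uniform_count_measure {..<N})"
  shows "(\<lambda>\<omega>. blockpart blk (idx \<omega>) (v \<omega>)) \<in> borel_measurable L"
proof (rule measurable_compose_countable'[where I="{..<N}" and g=idx])
  show "idx \<in> measurable L (count_space {..<N})" using meas_unif_count[OF idx] .
qed (use v in auto)

lemma meas_comp2: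
  assumes G: "(\<lambda>p. G (fst p) (snd p)) \<in> borel_measurable (borel \<Otimes>\<^sub>M D)"
    and x: "x \<in> borel_measurable L" and xi: "\<xi> \<in> measurable L D"
  shows "(\<lambda>\<omega>. G (x \<omega>) (\<xi> \<omega>)) \<in> borel_measurable L"
  using measurable_compose[OF measurable_Pair[OF x xi] G] by simp

lemma meas_alg_fst:
  assumes it: "\<forall>j<k. it j \<in> measurable L (uniform_count_measure {..<N})"
    and xit: "\<forall>j<k. xit j \<in> measurable L D"
    and ii: "\<forall>j<k. ii j \<in> measurable L (uniform_count_measure {..<N})"
    and xi: "\<forall>j<k. xi j \<in> measurable L D"
    and Xb: "\<forall>i<N. convex (Xb i) \<and> closed (Xb i) \<and> Xb i \<noteq> {}"
    and Phi: "\<forall>j. (\<lambda>p. Phi j (fst p) (snd p)) \<in> borel_measurable (borel \<Otimes>\<^sub>M D)"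
  shows "(\<lambda>\<omega>. fst (alg_iter blk Xb \<gamma> Phi x0 y0 it xit ii xi k \<omega>)) \<in> borel_measurable L"
  using assms
proof (induction k)
  case 0
  then show ?case by simp
next
  case (Suc k)
  have IH: "(\<lambda>\<omega>. fst (alg_iter blk Xb \<gamma> Phi x0 y0 it xit ii xi k \<omega>)) \<in> borel_measurable L"
    using Suc by auto
  have y': "(\<lambda>\<omega>. block_update blk Xb (it k \<omega>) (\<gamma> k) (fst (alg_iter blk Xb \<gamma> Phi x0 y0 it xit ii xi k \<omega>))
        (Phi k (fst (alg_iter blk Xb \<gamma> Phi x0 y0 it xit ii xi k \<omega>)) (xit k \<omega>))) \<in> borel_measurable L"
    using Suc.prems by (intro meas_block_update[OF IH] meas_comp2[OF _ IH]) auto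
  show ?case
    using Suc.prems by (simp add: Let_def) (intro meas_block_update[OF IH] meas_comp2[OF _ y']; auto)
qed

lemma meas_alg_snd:
  assumes it: "\<forall>j\<le>k. it j \<in> measurable L (uniform_count_measure {..<N})"
    and xit: "\<forall>j\<le>k. xit j \<in> measurable L D"
    and ii: "\<forall>j<k. ii j \<in> measurable L (uniform_count_measure {..<N})"
    and xi: "\<forall>j<k. xi j \<in> measurable L D"
    and Xb: "\<forall>i<N. convex (Xb i) \<and> closed (Xb i) \<and> Xb i \<noteq> {}"
    and Phi: "\<forall>j. (\<lambda>p. Phi j (fst p) (snd p)) \<in> borel_measurable (borel \<Otimes>\<^sub>M D)"
  shows "(\<lambda>\<omega>. snd (alg_iter blk Xb \<gamma> Phi x0 y0 it xit ii xi (Suc k) \<omega>)) \<in> borel_measurable L"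
proof -
  have IH: "(\<lambda>\<omega>. fst (alg_iter blk Xb \<gamma> Phi x0 y0 it xit ii xi k \<omega>)) \<in> borel_measurable L"
    using assms by (intro meas_alg_fst) auto
  show ?thesis
    using assms by (simp add: Let_def) (intro meas_block_update[OF IH] meas_comp2[OF _ IH]; auto)
qed

lemma meas_aux:
  assumes err: "\<forall>j<k. err j \<in> borel_measurable L"
    and X: "convex X" "closed X" "X \<noteq> {}"
  shows "(\<lambda>\<omega>. aux_seq X N \<gamma> x0 err k \<omega>) \<in> borel_measurable L"
  using err
proof (induction k)
  case 0 then show ?case by simp
next
  case (Suc k)
  then have IH: "(\<lambda>\<omega>. aux_seq X N \<gamma> x0 err k \<omega>) \<in> borel_measurable L" by auto
  have e: "err k \<in> borel_measurable L" using Suc by auto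
  show ?case
    by simp (rule measurable_compose[OF _ borel_measurable_continuous_onI[OF continuous_on_closest_point[OF X]]],
        intro borel_measurable_add IH borel_measurable_scaleR e borel_measurable_const)
qed

lemma aux_in:
  assumes "x0 \<in> X" "closed X" "X \<noteq> {}"
  shows "aux_seq X N \<gamma> x0 err k \<omega> \<in> X"
  using assms by (cases k) (auto intro: closest_point_in_set)

definition ef :: "nat \<Rightarrow> ('n \<Rightarrow> nat) \<Rightarrow> (real^'n \<Rightarrow> 'd \<Rightarrow> real^'n) \<Rightarrow> (real^'n \<Rightarrow> 'd \<Rightarrow> real^'n)
   \<Rightarrow> (real^'n \<Rightarrow> real^'n) \<Rightarrow> (real^'n \<Rightarrow> real^'n) \<Rightarrow> real \<Rightarrow> real^'n \<Rightarrow> nat \<Rightarrow> 'd \<Rightarrow> real^'n" where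
  "ef N blk F g Fbar sg r z i \<xi> = (g z \<xi> - sg z) + (real N *\<^sub>R blockpart blk i (g z \<xi>) - g z \<xi>)
     + r *\<^sub>R (F z \<xi> - Fbar z) + r *\<^sub>R (real N *\<^sub>R blockpart blk i (F z \<xi>) - F z \<xi>)"

lemma meas_ef:
  assumes F: "(\<lambda>p. F (fst p) (snd p)) \<in> borel_measurable (borel \<Otimes>\<^sub>M D)"
    and g: "(\<lambda>p. g (fst p) (snd p)) \<in> borel_measurable (borel \<Otimes>\<^sub>M D)"
    and Fb: "Fbar \<in> borel_measurable borel" and sg: "sg \<in> borel_measurable borel"
    and Y: "Y \<in> borel_measurable L" and xi: "\<xi> \<in> measurable L D"
    and idx: "idx \<in> measurable L (uniform_count_measure {..<N})"
  shows "(\<lambda>\<omega>. ef N blk F g Fbar sg r (Y \<omega>) (idx \<omega>) (\<xi> \<omega>)) \<in> borel_measurable L"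
proof (rule measurable_compose_countable'[where I="{..<N}" and g=idx])
  show "idx \<in> measurable L (count_space {..<N})" using meas_unif_count[OF idx] .
  fix i
  have gm: "(\<lambda>\<omega>. g (Y \<omega>) (\<xi> \<omega>)) \<in> borel_measurable L" by (rule meas_comp2[OF g Y xi])
  have Fm: "(\<lambda>\<omega>. F (Y \<omega>) (\<xi> \<omega>)) \<in> borel_measurable L" by (rule meas_comp2[OF F Y xi])
  have sgm: "(\<lambda>\<omega>. sg (Y \<omega>)) \<in> borel_measurable L" by (rule measurable_compose[OF Y sg])
  have Fbm: "(\<lambda>\<omega>. Fbar (Y \<omega>)) \<in> borel_measurable L" by (rule measurable_compose[OF Y Fb])
  show "(\<lambda>\<omega>. ef N blk F g Fbar sg r (Y \<omega>) i (\<xi> \<omega>)) \<in> borel_measurable L"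
    unfolding ef_def
    by (intro borel_measurable_add borel_measurable_diff borel_measurable_scaleR borel_measurable_const
        meas_blockpart gm Fm sgm Fbm)
qed auto



lemma (in prob_space) indep_distr_from_family:
  fixes E :: "'i \<Rightarrow> 'a set set"
  assumes indep: "indep_sets E UNIV"
    and stable: "\<And>i. Int_stable (E i)"
    and disj: "I1 \<inter> I2 = {}"
    and X: "X \<in> measurable (sigma (space M) (\<Union>i\<in>I1. E i)) S"
    and Y: "Y \<in> measurable (sigma (space M) (\<Union>i\<in>I2. E i)) T"
  shows "random_variable S X" "random_variable T Y"
    "distr M (S \<Otimes>\<^sub>M T) (\<lambda>x. (X x, Y x)) = distr M S X \<Otimes>\<^sub>M distr M T Y"
proof -
  have Ev: "\<And>i. E i \<subseteq> events" using indep by (auto simp: indep_sets_def)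
  then have Ev': "\<And>I. (\<Union>i\<in>I. E i) \<subseteq> Pow (space M)" using sets.sets_into_space by blast
  define G1 where "G1 = sigma_sets (space M) (\<Union>i\<in>I1. E i)"
  define G2 where "G2 = sigma_sets (space M) (\<Union>i\<in>I2. E i)"
  have "indep_sets (\<lambda>j. sigma_sets (space M) (\<Union>i\<in>case_bool I1 I2 j. E i)) UNIV"
  proof (rule indep_sets_collect_sigma)
    show "indep_sets E (\<Union>j\<in>UNIV. case_bool I1 I2 j)"
      by (rule indep_sets_mono_index[OF _ indep]) simp
    show "disjoint_family_on (case_bool I1 I2) UNIV"
      using disj by (auto simp: disjoint_family_on_def split: bool.split)
  qed (rule stable)
  moreover have "(\<lambda>j. sigma_sets (space M) (\<Union>i\<in>case_bool I1 I2 j. E i)) = case_bool G1 G2"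
    by (auto simp: G1_def G2_def fun_eq_iff split: bool.split)
  ultimately have ind: "indep_set G1 G2" by (simp add: indep_set_def)
  have sp: "\<And>I. space (sigma (space M) (\<Union>i\<in>I. E i)) = space M" using Ev' by (simp add: space_measure_of)
  have st: "\<And>I. sets (sigma (space M) (\<Union>i\<in>I. E i)) = sigma_sets (space M) (\<Union>i\<in>I. E i)"
    using Ev' by (simp add: sets_measure_of)
  have sub: "\<And>I. sigma_sets (space M) (\<Union>i\<in>I. E i) \<subseteq> events"
    using Ev by (intro sets.sigma_sets_subset) auto
  show XM: "random_variable S X"
    using X sub unfolding measurable_def st sp by blast
  show YM: "random_variable T Y"
    using Y sub unfolding measurable_def st sp by blast
  have XG: "\<And>A. A \<in> sets S \<Longrightarrow> X -` A \<inter> space M \<in> G1"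
    using X unfolding G1_def measurable_def st sp by blast
  have YG: "\<And>A. A \<in> sets T \<Longrightarrow> Y -` A \<inter> space M \<in> G2"
    using Y unfolding G2_def measurable_def st sp by blast
  have XY: "random_variable (S \<Otimes>\<^sub>M T) (\<lambda>x. (X x, Y x))"
    using XM YM by (rule measurable_Pair)
  interpret PX: prob_space "distr M S X" by (rule prob_space_distr) fact
  interpret PY: prob_space "distr M T Y" by (rule prob_space_distr) fact
  interpret XYp: pair_prob_space "distr M S X" "distr M T Y" ..
  show "distr M (S \<Otimes>\<^sub>M T) (\<lambda>x. (X x, Y x)) = distr M S X \<Otimes>\<^sub>M distr M T Y"
  proof (rule pair_measure_eqI[symmetric])
    show "sigma_finite_measure (distr M S X)" ..
    show "sigma_finite_measure (distr M T Y)" ..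
    fix A B assume A: "A \<in> sets (distr M S X)" and B: "B \<in> sets (distr M T Y)"
    have "emeasure (distr M (S \<Otimes>\<^sub>M T) (\<lambda>x. (X x, Y x))) (A \<times> B)
        = emeasure M ((\<lambda>x. (X x, Y x)) -` (A \<times> B) \<inter> space M)"
      using A B by (intro emeasure_distr[OF XY]) auto
    also have "(\<lambda>x. (X x, Y x)) -` (A \<times> B) \<inter> space M = (X -` A \<inter> space M) \<inter> (Y -` B \<inter> space M)"
      by auto
    also have "emeasure M \<dots> = emeasure M (X -` A \<inter> space M) * emeasure M (Y -` B \<inter> space M)"
      using indep_setD[OF ind XG YG, of A B] A B XM YM
      by (simp add: emeasure_eq_measure measure_nonneg ennreal_mult)
    also have "\<dots> = emeasure (distr M S X) A * emeasure (distr M T Y) B"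
      using XM YM A B by (simp add: emeasure_distr)
    finally show "emeasure (distr M S X) A * emeasure (distr M T Y) B
        = emeasure (distr M (S \<Otimes>\<^sub>M T) (\<lambda>x. (X x, Y x))) (A \<times> B)" by simp
  qed simp
qed

lemma meas_sigma_gen:
  assumes f: "f \<in> measurable M S" and G: "rv_events M S f \<subseteq> G" and GP: "G \<subseteq> Pow (space M)"
  shows "f \<in> measurable (sigma (space M) G) S"
  using f G GP unfolding measurable_def rv_events_def
  by (auto simp: sets_measure_of intro!: sigma_sets.Basic)

lemma Int_stable_rv_events: "Int_stable (rv_events M S f)"
  unfolding Int_stable_def rv_events_def
  by clarify (rule_tac x="A \<inter> Aa" in exI, auto)



lemma subgrad_bounded:
  fixes fbar :: "real^'n \<Rightarrow> real"
  assumes cv: "convex_on UNIV fbar" and sgd: "\<forall>x. is_subgradient fbar x (sg x)" and X: "compact X"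
  shows "\<exists>B. \<forall>x\<in>X. norm (sg x) \<le> B"
proof -
  obtain R where R: "\<forall>x\<in>X. norm x \<le> R"
    using compact_imp_bounded[OF X] by (auto simp: bounded_iff)
  have cont: "continuous_on UNIV fbar" by (rule convex_on_continuous[OF open_UNIV cv])
  have "bounded (fbar ` cball 0 (R+1))"
    by (intro compact_imp_bounded compact_continuous_image continuous_on_subset[OF cont]) auto
  then obtain B where B: "\<forall>y\<in>cball 0 (R+1). \<bar>fbar y\<bar> \<le> B"
    by (auto simp: bounded_iff)
  have "\<forall>x\<in>X. norm (sg x) \<le> 2 * B"
  proof
    fix x assume x: "x \<in> X"
    have xK: "x \<in> cball 0 (R+1)" using R x by auto
    show "norm (sg x) \<le> 2 * B"
    proof (cases "sg x = 0")
      case True then show ?thesis using B xK by force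
    next
      case False
      define s where "s = sg x"
      define y where "y = x + (1 / norm s) *\<^sub>R s"
      have ns: "norm s > 0" using False s_def by simp
      have "norm y \<le> norm x + norm ((1 / norm s) *\<^sub>R s)" unfolding y_def by (rule norm_triangle_ineq)
      also have "norm ((1 / norm s) *\<^sub>R s) = 1" using ns by simp
      finally have yK: "y \<in> cball 0 (R+1)" using R x by auto
      have "fbar y \<ge> fbar x + s \<bullet> (y - x)" using sgd s_def by (simp add: is_subgradient_def)
      also have "s \<bullet> (y - x) = norm s"
        using ns by (simp add: y_def inner_commute power2_norm_eq_inner[symmetric] power2_eq_square)
      finally have "norm s \<le> fbar y - fbar x" by simp
      also have "\<dots> \<le> 2 * B"
      proof -
        have "\<bar>fbar y\<bar> \<le> B" "\<bar>fbar x\<bar> \<le> B" using B xK yK by auto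
        then show ?thesis by linarith
      qed
      finally show ?thesis by (simp add: s_def)
    qed
  qed
  then show ?thesis by blast
qed

lemma int_norm_bound:
  fixes h :: "'d \<Rightarrow> 'b::euclidean_space"
  assumes D: "prob_space D" and hi: "integrable D h"
    and var: "(\<integral>\<^sup>+\<xi>. ennreal ((norm (h \<xi> - c))\<^sup>2) \<partial>D) \<le> ennreal (\<nu>\<^sup>2)"
  shows "(\<integral>\<xi>. norm (h \<xi>) \<partial>D) \<le> norm c + (1 + \<nu>\<^sup>2) / 2"
proof -
  interpret D: prob_space D by (rule D)
  have hm: "h \<in> borel_measurable D" using hi by auto
  have sqi: "integrable D (\<lambda>\<xi>. (norm (h \<xi> - c))\<^sup>2)"
  proof (rule integrableI_bounded)
    show "(\<lambda>\<xi>. (norm (h \<xi> - c))\<^sup>2) \<in> borel_measurable D" using hm by measurable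
    have "(\<integral>\<^sup>+\<xi>. ennreal (norm ((norm (h \<xi> - c))\<^sup>2)) \<partial>D) = (\<integral>\<^sup>+\<xi>. ennreal ((norm (h \<xi> - c))\<^sup>2) \<partial>D)"
      by simp
    also have "\<dots> < \<infinity>" using var by (simp add: le_less_trans)
    finally show "(\<integral>\<^sup>+\<xi>. ennreal (norm ((norm (h \<xi> - c))\<^sup>2)) \<partial>D) < \<infinity>" .
  qed
  have "ennreal (\<integral>\<xi>. (norm (h \<xi> - c))\<^sup>2 \<partial>D) = (\<integral>\<^sup>+\<xi>. ennreal ((norm (h \<xi> - c))\<^sup>2) \<partial>D)"
    by (rule nn_integral_eq_integral[OF sqi, symmetric]) auto
  also have "\<dots> \<le> ennreal (\<nu>\<^sup>2)" by (rule var)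
  finally have sqb: "(\<integral>\<xi>. (norm (h \<xi> - c))\<^sup>2 \<partial>D) \<le> \<nu>\<^sup>2"
    by (simp add: ennreal_le_iff)
  have pt: "norm (h \<xi>) \<le> norm c + (1 + (norm (h \<xi> - c))\<^sup>2) / 2" for \<xi>
  proof -
    have "norm (h \<xi>) \<le> norm c + norm (h \<xi> - c)" by (metis norm_triangle_sub add.commute)
    moreover have "norm (h \<xi> - c) \<le> (1 + (norm (h \<xi> - c))\<^sup>2) / 2"
      using sum_squares_bound[of 1 "norm (h \<xi> - c)"] by (simp add: power2_eq_square)
    ultimately show ?thesis by linarith
  qed
  have "(\<integral>\<xi>. norm (h \<xi>) \<partial>D) \<le> (\<integral>\<xi>. norm c + (1 + (norm (h \<xi> - c))\<^sup>2) / 2 \<partial>D)"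
    by (rule integral_mono) (use hi sqi pt in auto)
  also have "\<dots> = norm c + (1 + (\<integral>\<xi>. (norm (h \<xi> - c))\<^sup>2 \<partial>D)) / 2"
    using sqi by (simp add: D.prob_space)
  also have "\<dots> \<le> norm c + (1 + \<nu>\<^sup>2) / 2" using sqb by simp
  finally show ?thesis .
qed

lemma ef_bound:
  fixes g F :: "real^'n \<Rightarrow> 'd \<Rightarrow> real^'n"
  assumes r: "r \<ge> 0"
  shows "norm (ef N blk F g Fbar sg r z i \<xi>) \<le>
     (real N + 2) * (1 + r) * (norm (g z \<xi>) + norm (sg z) + norm (F z \<xi>) + norm (Fbar z))"
proof -
  define a where "a = g z \<xi>"
  define s where "s = sg z"
  define b where "b = F z \<xi>"
  define t where "t = Fbar z"
  have n1: "norm (a - s) \<le> norm a + norm s" by (rule norm_triangle_ineq4)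
  have n2: "norm (real N *\<^sub>R blockpart blk i a - a) \<le> real N * norm a + norm a"
    using norm_triangle_ineq4[of "real N *\<^sub>R blockpart blk i a" a] norm_blockpart_le[of blk i a]
    by (simp add: mult_left_mono order_trans)
  have n3: "norm (r *\<^sub>R (b - t)) \<le> r * (norm b + norm t)"
    using r norm_triangle_ineq4[of b t] by (simp add: mult_left_mono)
  have n4: "norm (r *\<^sub>R (real N *\<^sub>R blockpart blk i b - b)) \<le> r * (real N * norm b + norm b)"
    using r norm_triangle_ineq4[of "real N *\<^sub>R blockpart blk i b" b] norm_blockpart_le[of blk i b]
    by (simp add: mult_left_mono order_trans)
  have "norm (ef N blk F g Fbar sg r z i \<xi>) \<le> norm (a - s) + norm (real N *\<^sub>R blockpart blk i a - a)
      + norm (r *\<^sub>R (b - t)) + norm (r *\<^sub>R (real N *\<^sub>R blockpart blk i b - b))"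
    unfolding ef_def a_def s_def b_def t_def by (intro norm_triangle_le add_mono order_refl) 
  also have "\<dots> \<le> (norm a + norm s) + (real N * norm a + norm a) + r * (norm b + norm t) + r * (real N * norm b + norm b)"
    using n1 n2 n3 n4 by linarith
  also have "\<dots> \<le> (real N + 2) * (1 + r) * (norm a + norm s + norm b + norm t)"
    using r by (simp add: algebra_simps)
  finally show ?thesis by (simp add: a_def s_def b_def t_def)
qed

lemma int_ef:
  assumes D: "prob_space D" and gi: "integrable D (g z)" and Fi: "integrable D (F z)"
    and gu: "(\<integral>\<xi>. g z \<xi> \<partial>D) = sg z" and Fu: "(\<integral>\<xi>. F z \<xi> \<partial>D) = Fbar z"
  shows "integrable D (ef N blk F g Fbar sg r z i)"
    and "(\<integral>\<xi>. ef N blk F g Fbar sg r z i \<xi> \<partial>D) =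
       (real N *\<^sub>R blockpart blk i (sg z) - sg z) + r *\<^sub>R (real N *\<^sub>R blockpart blk i (Fbar z) - Fbar z)"
proof -
  interpret D: prob_space D by (rule D)
  have bg: "integrable D (\<lambda>\<xi>. blockpart blk i (g z \<xi>))"
    by (rule integrable_bounded_linear[OF blockpart_bl gi])
  have bF: "integrable D (\<lambda>\<xi>. blockpart blk i (F z \<xi>))"
    by (rule integrable_bounded_linear[OF blockpart_bl Fi])
  have ibg: "(\<integral>\<xi>. blockpart blk i (g z \<xi>) \<partial>D) = blockpart blk i (sg z)"
    using integral_bounded_linear[OF blockpart_bl gi] gu by simp
  have ibF: "(\<integral>\<xi>. blockpart blk i (F z \<xi>) \<partial>D) = blockpart blk i (Fbar z)"
    using integral_bounded_linear[OF blockpart_bl Fi] Fu by simp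
  show "integrable D (ef N blk F g Fbar sg r z i)"
    unfolding ef_def[abs_def] using gi Fi bg bF by auto
  show "(\<integral>\<xi>. ef N blk F g Fbar sg r z i \<xi> \<partial>D) =
       (real N *\<^sub>R blockpart blk i (sg z) - sg z) + r *\<^sub>R (real N *\<^sub>R blockpart blk i (Fbar z) - Fbar z)"
    unfolding ef_def using gi Fi bg bF gu Fu ibg ibF
    by (simp add: integral_add integral_diff integrable_add integrable_diff D.prob_space algebra_simps)
qed

lemma sum_ef_zero:
  assumes "\<forall>j. blk j < N"
  shows "(\<Sum>i<N. ((real N *\<^sub>R blockpart blk i s - s) + r *\<^sub>R (real N *\<^sub>R blockpart blk i t - t)) \<bullet> c) = 0"
proof -
  have cst: "\<And>v::real^'a. (\<Sum>i<N. v) = real N *\<^sub>R v"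
    by (simp add: sum_constant_scaleR del: sum_constant)
  have a: "\<And>v. (\<Sum>i<N. real N *\<^sub>R blockpart blk i v - v) = 0"
    using sum_blockpart[OF assms] cst by (simp add: sum_subtractf scaleR_sum_right[symmetric])
  have "(\<Sum>i<N. ((real N *\<^sub>R blockpart blk i s - s) + r *\<^sub>R (real N *\<^sub>R blockpart blk i t - t)))
     = (\<Sum>i<N. real N *\<^sub>R blockpart blk i s - s) + r *\<^sub>R (\<Sum>i<N. real N *\<^sub>R blockpart blk i t - t)"
    by (simp add: sum.distrib scaleR_sum_right)
  also have "\<dots> = 0" using a by simp
  finally show ?thesis by (simp add: inner_sum_left[symmetric])
qed



theorem lemma7:
  fixes M :: "'a measure" and D :: "(real^('m::finite)) measure"
    and N :: nat and blk :: "('n::finite) \<Rightarrow> nat" and Xb :: "nat \<Rightarrow> (real^'n) set" and X :: "(real^'n) set"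
    and F :: "real^'n \<Rightarrow> real^'m \<Rightarrow> real^'n" and f :: "real^'n \<Rightarrow> real^'m \<Rightarrow> real"
    and g :: "real^'n \<Rightarrow> real^'m \<Rightarrow> real^'n"
    and Fbar :: "real^'n \<Rightarrow> real^'n" and fbar :: "real^'n \<Rightarrow> real" and sg :: "real^'n \<Rightarrow> real^'n"
    and \<gamma> \<rho> :: "nat \<Rightarrow> real" and x0 y0 :: "real^'n"
    and it ii :: "nat \<Rightarrow> 'a \<Rightarrow> nat" and xit xi :: "nat \<Rightarrow> 'a \<Rightarrow> real^'m"
    and \<nu>F \<nu>f :: real and k :: nat
    and y u w_F w_f e_F e_f err :: "nat \<Rightarrow> 'a \<Rightarrow> real^'n"
  assumes M: "prob_space M"
    and D_sets: "sets D = sets borel"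
    \<comment> \<open>block structure: N blocks, each nonempty (n_i \<ge> 1)\<close>
    and blk_range: "\<forall>j. blk j < N"
    and blk_nonempty: "\<forall>i<N. \<exists>j. blk j = i"
    \<comment> \<open>X_i closed convex, living in the i-th block; X = prod X_i nonempty compact convex\<close>
    and Xb_sub: "\<forall>i<N. Xb i \<subseteq> block_subspace blk i"
    and Xb_closed: "\<forall>i<N. closed (Xb i)"
    and Xb_convex: "\<forall>i<N. convex (Xb i)"
    and X_def: "X = prod_set blk N Xb"
    and X_ne: "X \<noteq> {}" and X_compact: "compact X" and X_convex: "convex X"
    \<comment> \<open>expected maps and (stochastic) subgradients\<close>
    and meas_F: "(\<lambda>p. F (fst p) (snd p)) \<in> borel_measurable (borel \<Otimes>\<^sub>M D)"
    and meas_g: "(\<lambda>p. g (fst p) (snd p)) \<in> borel_measurable (borel \<Otimes>\<^sub>M D)"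
    and f_int: "\<forall>x. integrable D (f x)"
    and fbar_def: "\<forall>x. fbar x = (\<integral>\<xi>. f x \<xi> \<partial>D)"
    and F_int: "\<forall>x. integrable D (F x)"
    and Fbar_def: "\<forall>x. Fbar x = (\<integral>\<xi>. F x \<xi> \<partial>D)"
    and g_int: "\<forall>x. integrable D (g x)"
    and g_unbiased: "\<forall>x. (\<integral>\<xi>. g x \<xi> \<partial>D) = sg x"
    and sg_subgrad: "\<forall>x. is_subgradient fbar x (sg x)"
    \<comment> \<open>problem assumption\<close>
    and Fbar_cont: "continuous_on UNIV Fbar"
    and Fbar_mono: "\<forall>x y. (Fbar x - Fbar y) \<bullet> (x - y) \<ge> 0"
    and fbar_convex: "convex_on UNIV fbar"
    \<comment> \<open>algorithm data\<close>
    and x0X: "x0 \<in> X" and y0X: "y0 \<in> X"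
    and \<gamma>_pos: "\<forall>k. \<gamma> k > 0" and \<rho>_pos: "\<forall>k. \<rho> k > 0"
    \<comment> \<open>random-sample assumption (a): distributions and mutual independence\<close>
    and it_rv: "\<forall>k. it k \<in> measurable M (uniform_count_measure {..<N}) \<and>
                   distr M (uniform_count_measure {..<N}) (it k) = uniform_count_measure {..<N}"
    and ii_rv: "\<forall>k. ii k \<in> measurable M (uniform_count_measure {..<N}) \<and>
                   distr M (uniform_count_measure {..<N}) (ii k) = uniform_count_measure {..<N}"
    and xit_rv: "\<forall>k. xit k \<in> measurable M D \<and> distr M D (xit k) = D"
    and xi_rv: "\<forall>k. xi k \<in> measurable M D \<and> distr M D (xi k) = D"
    and indep: "prob_space.indep_sets M
        (\<lambda>(k, t). case t of
            Tilde_Index \<Rightarrow> rv_events M (uniform_count_measure {..<N}) (it k)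
          | Tilde_Sample \<Rightarrow> rv_events M D (xit k)
          | Index \<Rightarrow> rv_events M (uniform_count_measure {..<N}) (ii k)
          | Sample \<Rightarrow> rv_events M D (xi k)) UNIV"
    \<comment> \<open>random-sample assumption (c): bounded variances\<close>
    and \<nu>F_pos: "\<nu>F > 0" and \<nu>f_pos: "\<nu>f > 0"
    and var_F: "\<forall>x. (\<integral>\<^sup>+\<xi>. ennreal ((norm (F x \<xi> - Fbar x))\<^sup>2) \<partial>D) \<le> ennreal (\<nu>F\<^sup>2)"
    and var_g: "\<forall>x. (\<integral>\<^sup>+\<xi>. ennreal ((norm (g x \<xi> - sg x))\<^sup>2) \<partial>D) \<le> ennreal (\<nu>f\<^sup>2)"
    and y_def: "y = (\<lambda>k \<omega>. snd (alg_iter blk Xb \<gamma> (\<lambda>k z \<xi>. g z \<xi> + \<rho> k *\<^sub>R F z \<xi>)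
                                x0 y0 it xit ii xi k \<omega>))"
    and w_F_def: "w_F = (\<lambda>k \<omega>. F (y (Suc k) \<omega>) (xi k \<omega>) - Fbar (y (Suc k) \<omega>))"
    and w_f_def: "w_f = (\<lambda>k \<omega>. g (y (Suc k) \<omega>) (xi k \<omega>) - sg (y (Suc k) \<omega>))"
    and e_F_def: "e_F = (\<lambda>k \<omega>. real N *\<^sub>R blockpart blk (ii k \<omega>) (F (y (Suc k) \<omega>) (xi k \<omega>))
                      - F (y (Suc k) \<omega>) (xi k \<omega>))"
    and e_f_def: "e_f = (\<lambda>k \<omega>. real N *\<^sub>R blockpart blk (ii k \<omega>) (g (y (Suc k) \<omega>) (xi k \<omega>))
                      - g (y (Suc k) \<omega>) (xi k \<omega>))"
    and err_def: "err = (\<lambda>k \<omega>. w_f k \<omega> + e_f k \<omega> + \<rho> k *\<^sub>R w_F k \<omega> + \<rho> k *\<^sub>R e_F k \<omega>)"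
    and u_def: "u = aux_seq X N \<gamma> x0 err"
  shows "integrable M (\<lambda>\<omega>. err k \<omega> \<bullet> (u k \<omega> - y (Suc k) \<omega>)) \<and>
         (\<integral>\<omega>. err k \<omega> \<bullet> (u k \<omega> - y (Suc k) \<omega>) \<partial>M) = 0"
proof -
  interpret prob_space M by (rule M)
  have Dp: "prob_space D" using xi_rv prob_space_distr[of "xi 0" D] by auto
  interpret D: prob_space D by (rule Dp)
  have Npos: "N > 0" using blk_range by (metis gr_zeroI less_nat_zero_code)
  interpret U: prob_space "uniform_count_measure {..<N}"
    using Npos by (intro prob_space_uniform_count_measure) auto
  have Xb_ne: "\<forall>i<N. Xb i \<noteq> {}"
  proof (intro allI impI)
    fix i assume "i < N"
    obtain x where "x \<in> X" using X_ne by blast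
    then show "Xb i \<noteq> {}" using \<open>i < N\<close> X_def by (auto simp: prod_set_def)
  qed
  have XbC: "\<forall>i<N. convex (Xb i) \<and> closed (Xb i) \<and> Xb i \<noteq> {}"
    using Xb_ne Xb_closed Xb_convex by auto
  have X_closed: "closed X" using X_compact by (rule compact_imp_closed)
  define Phi where "Phi = (\<lambda>k z \<xi>. g z \<xi> + \<rho> k *\<^sub>R F z \<xi>)"
  have Phi_m: "\<forall>j. (\<lambda>p. Phi j (fst p) (snd p)) \<in> borel_measurable (borel \<Otimes>\<^sub>M D)"
    unfolding Phi_def by (intro allI borel_measurable_add borel_measurable_scaleR borel_measurable_const meas_F meas_g)
  have Fbar_m: "Fbar \<in> borel_measurable borel"
    by (rule borel_measurable_continuous_onI[OF Fbar_cont])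
  have sg_eq: "sg = (\<lambda>x. \<integral>\<xi>. g x \<xi> \<partial>D)" using g_unbiased by auto
  have sg_m: "sg \<in> borel_measurable borel"
    unfolding sg_eq
    by (rule D.borel_measurable_lebesgue_integral) (use meas_g in \<open>simp add: split_beta'\<close>)
  have sp_unif: "space (uniform_count_measure {..<N}) = {..<N}"
    by (simp add: space_uniform_count_measure)
  have it_lt: "\<And>j \<omega>. \<omega> \<in> space M \<Longrightarrow> it j \<omega> < N"
  proof -
    fix j \<omega> assume om: "\<omega> \<in> space M"
    have "it j \<in> measurable M (uniform_count_measure {..<N})" using it_rv by simp
    from measurable_space[OF this om] show "it j \<omega> < N" by (simp add: sp_unif)
  qed
  have ii_lt: "\<And>j \<omega>. \<omega> \<in> space M \<Longrightarrow> ii j \<omega> < N"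
  proof -
    fix j \<omega> assume om: "\<omega> \<in> space M"
    have "ii j \<in> measurable M (uniform_count_measure {..<N})" using ii_rv by simp
    from measurable_space[OF this om] show "ii j \<omega> < N" by (simp add: sp_unif)
  qed
  have Xh: "\<And>i. i < N \<Longrightarrow> Xb i \<subseteq> block_subspace blk i" "\<And>i. i < N \<Longrightarrow> closed (Xb i)"
      "\<And>i. i < N \<Longrightarrow> Xb i \<noteq> {}"
    using Xb_sub XbC by auto
  have alg_in: "\<And>j. \<omega> \<in> space M \<Longrightarrow> fst (alg_iter blk Xb \<gamma> Phi x0 y0 it xit ii xi j \<omega>) \<in> X
      \<and> snd (alg_iter blk Xb \<gamma> Phi x0 y0 it xit ii xi j \<omega>) \<in> X" for \<omega>
  proof -
    fix j assume om: "\<omega> \<in> space M"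
    show "?thesis j"
    proof (induction j)
      case 0 then show ?case using x0X y0X by simp
    next
      case (Suc j)
      let ?x = "fst (alg_iter blk Xb \<gamma> Phi x0 y0 it xit ii xi j \<omega>)"
      let ?y = "block_update blk Xb (it j \<omega>) (\<gamma> j) ?x (Phi j ?x (xit j \<omega>))"
      have xX: "?x \<in> prod_set blk N Xb" using Suc X_def by simp
      have yX: "?y \<in> prod_set blk N Xb"
        by (rule block_update_in[OF xX it_lt[OF om] Xh(1)[OF it_lt[OF om]] Xh(2)[OF it_lt[OF om]] Xh(3)[OF it_lt[OF om]]])
      have x'X: "block_update blk Xb (ii j \<omega>) (\<gamma> j) ?x (Phi j ?y (xi j \<omega>)) \<in> prod_set blk N Xb"
        by (rule block_update_in[OF xX ii_lt[OF om] Xh(1)[OF ii_lt[OF om]] Xh(2)[OF ii_lt[OF om]] Xh(3)[OF ii_lt[OF om]]])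
      show ?case using yX x'X X_def by (simp add: Let_def)
    qed
  qed
  have y_eq: "y = (\<lambda>k \<omega>. snd (alg_iter blk Xb \<gamma> Phi x0 y0 it xit ii xi k \<omega>))"
    unfolding y_def Phi_def ..
  have y_in: "\<And>j \<omega>. \<omega> \<in> space M \<Longrightarrow> y j \<omega> \<in> X" using alg_in y_eq by simp
  have u_in: "\<And>j \<omega>. u j \<omega> \<in> X" unfolding u_def using x0X X_closed X_ne by (rule aux_in)
  have err_eq: "\<And>j \<omega>. err j \<omega> = ef N blk F g Fbar sg (\<rho> j) (y (Suc j) \<omega>) (ii j \<omega>) (xi j \<omega>)"
    unfolding err_def w_f_def e_f_def w_F_def e_F_def ef_def by simp
  define E where "E = (\<lambda>(k, t). case t of
            Tilde_Index \<Rightarrow> rv_events M (uniform_count_measure {..<N}) (it k)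
          | Tilde_Sample \<Rightarrow> rv_events M D (xit k)
          | Index \<Rightarrow> rv_events M (uniform_count_measure {..<N}) (ii k)
          | Sample \<Rightarrow> rv_events M D (xi k))"
  have indE: "indep_sets E UNIV" using indep unfolding E_def .
  have E_stable: "\<And>i. Int_stable (E i)"
  proof -
    fix i :: "nat \<times> sample_tag"
    obtain a b where i: "i = (a, b)" by fastforce
    show "Int_stable (E i)" unfolding i E_def by (cases b) (simp_all add: Int_stable_rv_events)
  qed
  have E_pow: "\<And>I. (\<Union>i\<in>I. E i) \<subseteq> Pow (space M)"
    by (auto simp: E_def rv_events_def split: sample_tag.splits)
  have gen: "\<And>p I S f. p \<in> I \<Longrightarrow> E p = rv_events M S f \<Longrightarrow> f \<in> measurable M S \<Longrightarrow>
      f \<in> measurable (sigma (space M) (\<Union>i\<in>I. E i)) S"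
    by (rule meas_sigma_gen[OF _ _ E_pow]) auto
  define I1 where "I1 = {p. fst p < k} \<union> {(k, Tilde_Index), (k, Tilde_Sample)}"
  define M1 where "M1 = sigma (space M) (\<Union>i\<in>I1. E i)"
  have it1: "\<forall>j\<le>k. it j \<in> measurable M1 (uniform_count_measure {..<N})"
    using it_rv unfolding M1_def by (intro allI impI gen[of "(_, Tilde_Index)"]) (auto simp: I1_def E_def)
  have xit1: "\<forall>j\<le>k. xit j \<in> measurable M1 D"
    using xit_rv unfolding M1_def by (intro allI impI gen[of "(_, Tilde_Sample)"]) (auto simp: I1_def E_def)
  have ii1: "\<forall>j<k. ii j \<in> measurable M1 (uniform_count_measure {..<N})"
    using ii_rv unfolding M1_def by (intro allI impI gen[of "(_, Index)"]) (auto simp: I1_def E_def)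
  have xi1: "\<forall>j<k. xi j \<in> measurable M1 D"
    using xi_rv unfolding M1_def by (intro allI impI gen[of "(_, Sample)"]) (auto simp: I1_def E_def)
  have Y1: "y (Suc k) \<in> borel_measurable M1"
    unfolding y_eq by (rule meas_alg_snd[OF it1 xit1 ii1 xi1 XbC Phi_m])
  have err1: "\<forall>j<k. err j \<in> borel_measurable M1"
  proof (intro allI impI)
    fix j assume j: "j < k"
    have Yj: "y (Suc j) \<in> borel_measurable M1"
      unfolding y_eq by (rule meas_alg_snd) (use it1 xit1 ii1 xi1 XbC Phi_m j in auto)
    show "err j \<in> borel_measurable M1"
      unfolding err_eq[abs_def]
      by (rule meas_ef[OF meas_F meas_g Fbar_m sg_m Yj]) (use xi1 ii1 j in auto)
  qed
  have u1: "u k \<in> borel_measurable M1"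
    unfolding u_def using meas_aux[OF err1 X_convex X_closed X_ne] by simp
  have YM: "y (Suc k) \<in> borel_measurable M"
    unfolding y_eq by (rule meas_alg_snd) (use it_rv xit_rv ii_rv xi_rv XbC Phi_m in auto)
  have errM: "\<forall>j. err j \<in> borel_measurable M"
  proof
    fix j
    have Yj: "y (Suc j) \<in> borel_measurable M"
      unfolding y_eq by (rule meas_alg_snd) (use it_rv xit_rv ii_rv xi_rv XbC Phi_m in auto)
    show "err j \<in> borel_measurable M"
      unfolding err_eq[abs_def]
      by (rule meas_ef[OF meas_F meas_g Fbar_m sg_m Yj]) (use xi_rv ii_rv in auto)
  qed
  have uM: "u k \<in> borel_measurable M"
    unfolding u_def using meas_aux[of k err M X] errM X_convex X_closed X_ne by simp
  define I2 where "I2 = {(k, Index), (k, Sample)}"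
  define M2 where "M2 = sigma (space M) (\<Union>i\<in>I2. E i)"
  have ii2: "ii k \<in> measurable M2 (uniform_count_measure {..<N})"
    using ii_rv unfolding M2_def by (intro gen[of "(k, Index)"]) (auto simp: I2_def E_def)
  have xi2: "xi k \<in> measurable M2 D"
    using xi_rv unfolding M2_def by (intro gen[of "(k, Sample)"]) (auto simp: I2_def E_def)
  define Z where "Z = (\<lambda>\<omega>. (y (Suc k) \<omega>, u k \<omega>))"
  define W where "W = (\<lambda>\<omega>. (ii k \<omega>, xi k \<omega>))"
  have dj: "I1 \<inter> I2 = {}" "I1 \<inter> {(k, Sample)} = {}" "{(k, Index)} \<inter> {(k, Sample)} = {}"
    by (auto simp: I1_def I2_def)
  have Z1: "Z \<in> measurable M1 (borel \<Otimes>\<^sub>M borel)" unfolding Z_def by (intro measurable_Pair Y1 u1)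
  have W2: "W \<in> measurable M2 (uniform_count_measure {..<N} \<Otimes>\<^sub>M D)" unfolding W_def by (intro measurable_Pair ii2 xi2)
  note ind1 = indep_distr_from_family[OF indE E_stable dj(1) Z1[unfolded M1_def] W2[unfolded M2_def]]
  have ii2': "ii k \<in> measurable (sigma (space M) (\<Union>i\<in>{(k, Index)}. E i)) (uniform_count_measure {..<N})"
    using ii_rv by (intro gen[of "(k, Index)"]) (auto simp: E_def)
  have xi2': "xi k \<in> measurable (sigma (space M) (\<Union>i\<in>{(k, Sample)}. E i)) D"
    using xi_rv by (intro gen[of "(k, Sample)"]) (auto simp: E_def)
  note ind2 = indep_distr_from_family[OF indE E_stable dj(3) ii2' xi2']
  note ind3 = indep_distr_from_family[OF indE E_stable dj(2) Y1[unfolded M1_def] xi2']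
  have dW: "distr M (uniform_count_measure {..<N} \<Otimes>\<^sub>M D) W = uniform_count_measure {..<N} \<Otimes>\<^sub>M D"
    using ind2(3) ii_rv xi_rv by (simp add: W_def)
  define PZ where "PZ = distr M (borel \<Otimes>\<^sub>M borel) Z"
  define PW where "PW = uniform_count_measure {..<N} \<Otimes>\<^sub>M D"
  have jZW: "distr M ((borel \<Otimes>\<^sub>M borel) \<Otimes>\<^sub>M PW) (\<lambda>x. (Z x, W x)) = PZ \<Otimes>\<^sub>M PW"
    using ind1(3) dW by (simp add: PZ_def PW_def)
  define PY where "PY = distr M borel (y (Suc k))"
  have jY: "distr M (borel \<Otimes>\<^sub>M D) (\<lambda>x. (y (Suc k) x, xi k x)) = PY \<Otimes>\<^sub>M D"
    using ind3(3) xi_rv by (simp add: PY_def)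
  interpret PZ: prob_space PZ unfolding PZ_def by (rule prob_space_distr[OF ind1(1)])
  interpret PY: prob_space PY unfolding PY_def by (rule prob_space_distr[OF ind3(1)])
  interpret PW: prob_space PW unfolding PW_def by (rule prob_space_pair) unfold_locales
  interpret PZW: pair_sigma_finite PZ PW ..
  interpret PYD: pair_sigma_finite PY D ..
  interpret UD: pair_sigma_finite "uniform_count_measure {..<N}" D ..
  obtain Bs where Bs: "\<forall>x\<in>X. norm (sg x) \<le> Bs"
    using subgrad_bounded[OF fbar_convex sg_subgrad X_compact] by blast
  obtain BF where BF: "\<forall>x\<in>X. norm (Fbar x) \<le> BF"
    using compact_imp_bounded[OF compact_continuous_image[OF continuous_on_subset[OF Fbar_cont] X_compact]]
    by (auto simp: bounded_iff)
  obtain R where R: "\<forall>x\<in>X. norm x \<le> R"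
    using compact_imp_bounded[OF X_compact] by (auto simp: bounded_iff)
  define cp where "cp = closest_point X"
  have cp_in: "\<And>z. cp z \<in> X" unfolding cp_def using X_closed X_ne by (rule closest_point_in_set)
  have cp_m: "cp \<in> borel_measurable borel"
    unfolding cp_def by (rule borel_measurable_continuous_onI[OF continuous_on_closest_point[OF X_convex X_closed X_ne]])
  define \<phi> where "\<phi> = (\<lambda>p. norm (g (cp (fst p)) (snd p)) + norm (sg (cp (fst p))) + norm (F (cp (fst p)) (snd p)) + norm (Fbar (cp (fst p))))"
  have \<phi>_m: "\<phi> \<in> borel_measurable (borel \<Otimes>\<^sub>M D)"
  proof -
    have c1: "(\<lambda>p. cp (fst p)) \<in> borel_measurable (borel \<Otimes>\<^sub>M D)"
      by (rule measurable_compose[OF measurable_fst cp_m])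
    have s1: "snd \<in> measurable (borel \<Otimes>\<^sub>M D) D" by (rule measurable_snd)
    show ?thesis unfolding \<phi>_def
      using meas_comp2[OF meas_g c1 s1] meas_comp2[OF meas_F c1 s1]
          measurable_compose[OF c1 sg_m] measurable_compose[OF c1 Fbar_m]
      by (intro borel_measurable_add) (auto intro: measurable_compose[OF _ borel_measurable_norm])
  qed
  define C where "C = (Bs + (1 + \<nu>f\<^sup>2) / 2) + Bs + (BF + (1 + \<nu>F\<^sup>2) / 2) + BF"
  have \<phi>_int: "\<And>z. integrable D (\<lambda>\<xi>. \<phi> (z, \<xi>))"
    unfolding \<phi>_def using g_int F_int by auto
  have \<phi>_bound: "\<And>z. (\<integral>\<xi>. \<phi> (z, \<xi>) \<partial>D) \<le> C"
  proof -
    fix z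
    have "(\<integral>\<xi>. \<phi> (z, \<xi>) \<partial>D) = (\<integral>\<xi>. norm (g (cp z) \<xi>) \<partial>D) + norm (sg (cp z)) + (\<integral>\<xi>. norm (F (cp z) \<xi>) \<partial>D) + norm (Fbar (cp z))"
      unfolding \<phi>_def using g_int F_int by (simp add: D.prob_space)
    also have "\<dots> \<le> (norm (sg (cp z)) + (1 + \<nu>f\<^sup>2) / 2) + norm (sg (cp z)) + (norm (Fbar (cp z)) + (1 + \<nu>F\<^sup>2) / 2) + norm (Fbar (cp z))"
      using int_norm_bound[OF Dp, of "g (cp z)" "sg (cp z)" \<nu>f] int_norm_bound[OF Dp, of "F (cp z)" "Fbar (cp z)" \<nu>F]
        g_int F_int var_g var_F by (intro add_mono) auto
    also have "\<dots> \<le> C" unfolding C_def using Bs BF cp_in[of z] by (intro add_mono) auto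
    finally show "(\<integral>\<xi>. \<phi> (z, \<xi>) \<partial>D) \<le> C" .
  qed
  have sPY: "sets PY = sets borel" by (simp add: PY_def)
  have \<phi>_m': "\<phi> \<in> borel_measurable (PY \<Otimes>\<^sub>M D)"
    using \<phi>_m by (simp add: measurable_cong_sets[OF sets_pair_measure_cong[OF sPY refl] refl])
  have \<phi>_PY: "integrable (PY \<Otimes>\<^sub>M D) \<phi>"
  proof (rule PYD.Fubini_integrable[OF \<phi>_m'])
    show "integrable PY (\<lambda>z. \<integral>\<xi>. norm (\<phi> (z, \<xi>)) \<partial>D)"
    proof (rule PY.integrable_const_bound[where B=C])
      have nn: "\<And>z \<xi>. norm (\<phi> (z, \<xi>)) = \<phi> (z, \<xi>)" unfolding \<phi>_def by simp
      show "AE z in PY. norm (\<integral>\<xi>. norm (\<phi> (z, \<xi>)) \<partial>D) \<le> C"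
        unfolding nn using \<phi>_bound by (intro AE_I2) (simp add: \<phi>_def)
      show "(\<lambda>z. \<integral>\<xi>. norm (\<phi> (z, \<xi>)) \<partial>D) \<in> borel_measurable PY"
        by (rule D.borel_measurable_lebesgue_integral) (use \<phi>_m' in simp)
    qed
    show "AE z in PY. integrable D (\<lambda>\<xi>. \<phi> (z, \<xi>))" using \<phi>_int by simp
  qed
  have YX_m: "(\<lambda>x. (y (Suc k) x, xi k x)) \<in> measurable M (borel \<Otimes>\<^sub>M D)"
    using YM xi_rv by (intro measurable_Pair) auto
  have \<phi>_M: "integrable M (\<lambda>\<omega>. \<phi> (y (Suc k) \<omega>, xi k \<omega>))"
    using \<phi>_PY integrable_distr_eq[OF YX_m \<phi>_m] jY by simp
  define H where "H = (\<lambda>p::((real^'n) \<times> (real^'n)) \<times> (nat \<times> (real^'m)).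
     ef N blk F g Fbar sg (\<rho> k) (fst (fst p)) (fst (snd p)) (snd (snd p)) \<bullet> (snd (fst p) - fst (fst p)))"
  have eqH: "\<And>\<omega>. err k \<omega> \<bullet> (u k \<omega> - y (Suc k) \<omega>) = H (Z \<omega>, W \<omega>)"
    by (simp add: H_def err_eq Z_def W_def)
  have R0: "R \<ge> 0" using R X_ne norm_ge_zero order_trans by blast
  have intT: "integrable M (\<lambda>\<omega>. err k \<omega> \<bullet> (u k \<omega> - y (Suc k) \<omega>))"
  proof (rule Bochner_Integration.integrable_bound)
    show "integrable M (\<lambda>\<omega>. (2 * R * ((real N + 2) * (1 + \<rho> k))) * \<phi> (y (Suc k) \<omega>, xi k \<omega>))"
      using \<phi>_M by simp
    show "(\<lambda>\<omega>. err k \<omega> \<bullet> (u k \<omega> - y (Suc k) \<omega>)) \<in> borel_measurable M"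
      using errM uM YM by (intro borel_measurable_inner borel_measurable_diff) auto
    show "AE \<omega> in M. norm (err k \<omega> \<bullet> (u k \<omega> - y (Suc k) \<omega>))
        \<le> norm ((2 * R * ((real N + 2) * (1 + \<rho> k))) * \<phi> (y (Suc k) \<omega>, xi k \<omega>))"
    proof (rule AE_I2)
      fix \<omega> assume om: "\<omega> \<in> space M"
      have yX: "y (Suc k) \<omega> \<in> X" by (rule y_in[OF om])
      have cpy: "cp (y (Suc k) \<omega>) = y (Suc k) \<omega>" unfolding cp_def using yX by (rule closest_point_self)
      have nd: "norm (u k \<omega> - y (Suc k) \<omega>) \<le> 2 * R"
      proof -
        have "norm (u k \<omega>) \<le> R" "norm (y (Suc k) \<omega>) \<le> R" using R u_in[of k \<omega>] yX by auto
        then show ?thesis using norm_triangle_ineq4[of "u k \<omega>" "y (Suc k) \<omega>"] by linarith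
      qed
      have ne: "norm (err k \<omega>) \<le> (real N + 2) * (1 + \<rho> k) * \<phi> (y (Suc k) \<omega>, xi k \<omega>)"
        unfolding err_eq \<phi>_def using ef_bound[of "\<rho> k" N blk F g Fbar sg "y (Suc k) \<omega>" "ii k \<omega>" "xi k \<omega>"] \<rho>_pos cpy
        by (simp add: less_imp_le)
      have phi0: "\<phi> (y (Suc k) \<omega>, xi k \<omega>) \<ge> 0" unfolding \<phi>_def by simp
      have c0: "(real N + 2) * (1 + \<rho> k) \<ge> 0" using \<rho>_pos by (simp add: less_imp_le)
      have "norm (err k \<omega> \<bullet> (u k \<omega> - y (Suc k) \<omega>)) \<le> norm (err k \<omega>) * norm (u k \<omega> - y (Suc k) \<omega>)"
        using Cauchy_Schwarz_ineq2 by simp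
      also have "\<dots> \<le> ((real N + 2) * (1 + \<rho> k) * \<phi> (y (Suc k) \<omega>, xi k \<omega>)) * (2 * R)"
        by (rule mult_mono[OF ne nd]) (use c0 phi0 in auto)
      also have "\<dots> = norm ((2 * R * ((real N + 2) * (1 + \<rho> k))) * \<phi> (y (Suc k) \<omega>, xi k \<omega>))"
        using c0 phi0 R0 \<rho>_pos by (simp add: abs_mult less_imp_le)
      finally show "norm (err k \<omega> \<bullet> (u k \<omega> - y (Suc k) \<omega>))
        \<le> norm ((2 * R * ((real N + 2) * (1 + \<rho> k))) * \<phi> (y (Suc k) \<omega>, xi k \<omega>))" .
    qed
  qed
  have H_m: "H \<in> borel_measurable ((borel \<Otimes>\<^sub>M borel) \<Otimes>\<^sub>M PW)"
  proof -
    let ?L = "(borel \<Otimes>\<^sub>M borel) \<Otimes>\<^sub>M PW"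
    have a: "(\<lambda>p. fst (fst p)) \<in> borel_measurable ?L" by measurable
    have b: "(\<lambda>p. snd (fst p)) \<in> borel_measurable ?L" by measurable
    have c: "(\<lambda>p. fst (snd p)) \<in> measurable ?L (uniform_count_measure {..<N})"
      unfolding PW_def by measurable
    have d: "(\<lambda>p. snd (snd p)) \<in> measurable ?L D"
      unfolding PW_def by measurable
    show ?thesis unfolding H_def
      by (intro borel_measurable_inner borel_measurable_diff a b meas_ef[OF meas_F meas_g Fbar_m sg_m a d c])
  qed
  have ZW_m: "(\<lambda>x. (Z x, W x)) \<in> measurable M ((borel \<Otimes>\<^sub>M borel) \<Otimes>\<^sub>M PW)"
    unfolding PW_def using ind1(1,2) by (intro measurable_Pair)
  have intH': "integrable M (\<lambda>\<omega>. H (Z \<omega>, W \<omega>))" using intT eqH by simp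
  have intH: "integrable (PZ \<Otimes>\<^sub>M PW) H"
    using integrable_distr_eq[OF ZW_m H_m] intH' jZW by simp
  have "(\<integral>\<omega>. H (Z \<omega>, W \<omega>) \<partial>M) = integral\<^sup>L (PZ \<Otimes>\<^sub>M PW) H"
    using integral_distr[OF ZW_m H_m] jZW by simp
  also have "\<dots> = (\<integral>z. (\<integral>w. H (z, w) \<partial>PW) \<partial>PZ)"
    by (rule PZW.integral_fst'[OF intH, symmetric])
  also have "\<dots> = 0"
  proof (rule integral_eq_zero_AE)
    show "AE z in PZ. (\<integral>w. H (z, w) \<partial>PW) = 0"
      using PZW.AE_integrable_fst'[OF intH]
    proof eventually_elim
      case (elim z)
      then have iz: "integrable (uniform_count_measure {..<N} \<Otimes>\<^sub>M D) (\<lambda>w. H (z, w))"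
        by (simp add: PW_def)
      define c where "c = snd z - fst z"
      have Di: "\<And>i. (\<integral>\<xi>. H (z, (i, \<xi>)) \<partial>D) =
          ((real N *\<^sub>R blockpart blk i (sg (fst z)) - sg (fst z)) + \<rho> k *\<^sub>R (real N *\<^sub>R blockpart blk i (Fbar (fst z)) - Fbar (fst z))) \<bullet> c"
      proof -
        fix i
        note ie = int_ef[where z="fst z" and N=N and blk=blk and r="\<rho> k" and i=i and D=D and g=g and F=F and sg=sg and Fbar=Fbar,
           OF Dp g_int[rule_format] F_int[rule_format] g_unbiased[rule_format] Fbar_def[rule_format, symmetric]]
        have "(\<integral>\<xi>. H (z, (i, \<xi>)) \<partial>D) = (\<integral>\<xi>. ef N blk F g Fbar sg (\<rho> k) (fst z) i \<xi> \<bullet> c \<partial>D)"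
          by (simp add: H_def c_def)
        also have "\<dots> = (\<integral>\<xi>. ef N blk F g Fbar sg (\<rho> k) (fst z) i \<xi> \<partial>D) \<bullet> c"
          using ie(1) by simp
        finally show "?thesis i" using ie(2) by simp
      qed
      have "(\<integral>w. H (z, w) \<partial>PW) = (\<integral>i. (\<integral>\<xi>. H (z, (i, \<xi>)) \<partial>D) \<partial>uniform_count_measure {..<N})"
        unfolding PW_def using UD.integral_fst'[OF iz, symmetric] by simp
      also have "\<dots> = (\<Sum>i<N. (\<integral>\<xi>. H (z, (i, \<xi>)) \<partial>D)) / real N"
        by (simp add: integral_uniform_count_measure)
      also have "\<dots> = 0" unfolding Di using sum_ef_zero[OF blk_range] by simp
      finally show ?case .
    qed
  qed
  finally have int0: "(\<integral>\<omega>. H (Z \<omega>, W \<omega>) \<partial>M) = 0" .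
  show ?thesis using intT int0 eqH by simp
qed


end
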